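(* For all integers $n \ge 0$ and $k \ge 0$, the word $W_n$ occurs exactly $3^k$ times as a (contiguous) subword of $W_{n+k}$. Equivalently, writing $W_{n+k}$ as the concatenation of $3^k$ copies of $W_n$ with a single letter $1$ inserted between some consecutive copies (as results from iterating $W_{m+1}=W_mW_m1W_m$), the only occurrences of $W_n$ in $W_{n+k}$ are these $3^k$ copies.
   Context: Words are finite strings over the alphabet $\{0,1\}$. Define $W_0 = 0$ and $W_{m+1} = W_m W_m 1 W_m$ (concatenation) for $m\ge 0$. An occurrence of a word $u$ in a word $v$ is a position at which $u$ appears as a contiguous block of $v$. *)

theory Defs
  imports Main
begin

fun W :: "nat \<Rightarrow> nat list" where
  "W 0 = [0]"
| "W (Suc m) = W m @ W m @ [1] @ W m"

definition occurrences :: "'a list \<Rightarrow> 'a list \<Rightarrow> nat set" where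
  "occurrences u v = {i. i + length u \<le> length v \<and> take (length u) (drop i v) = u}"

end

theory Submission
  imports Defs
begin

definition tok :: "nat \<Rightarrow> bool \<Rightarrow> nat list" where
  "tok n b = (if b then W n else [1])"

definition C :: "nat \<Rightarrow> bool list \<Rightarrow> nat list" where
  "C n bs = concat (map (tok n) bs)"

lemma C_simps[simp]: "C n [] = []" "C n (b#bs) = tok n b @ C n bs"
  "C n (xs@ys) = C n xs @ C n ys" by (simp_all add: C_def)

lemma W_ne: "W n \<noteq> []" by (induct n) auto
lemma W_hd: "W n ! 0 = 0" by (induct n) (auto simp: nth_append W_ne)
lemma tok_len: "length (tok n b) \<ge> 1" using W_ne[of n] by (cases "W n") (auto simp: tok_def)
lemma tok_hd: "tok n b ! 0 = (if b then 0 else 1)" by (simp add: tok_def W_hd)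

fun sig :: "bool list \<Rightarrow> bool list" where
  "sig [] = []"
| "sig (b#bs) = (if b then [True,True,False,True] else [False]) @ sig bs"

lemma sig_append: "sig (xs@ys) = sig xs @ sig ys" by (induct xs) auto

lemma C_sig: "C n (sig bs) = C (Suc n) bs" by (induct bs) (auto simp: tok_def)

lemma cnt_sig: "length (filter id (sig bs)) = 3 * length (filter id bs)"
  by (induct bs) auto

lemma W_C: "W (n + k) = C n ((sig ^^ k) [True])"
proof (induct k arbitrary: n)
  case 0 then show ?case by (simp add: tok_def)
next
  case (Suc k)
  have "W (n + Suc k) = W (Suc n + k)" by simp
  also have "\<dots> = C (Suc n) ((sig ^^ k) [True])" by (rule Suc)
  also have "\<dots> = C n ((sig ^^ Suc k) [True])" by (simp add: C_sig)
  finally show ?case .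
qed

lemma pos_less: assumes "j < j'" "j' \<le> length cs"
  shows "length (C n (take j cs)) < length (C n (take j' cs))"
proof -
  have t: "take j' cs = take j cs @ take (j'-j) (drop j cs)"
    using assms take_add[of j "j'-j" cs] by simp
  have "take (j'-j) (drop j cs) \<noteq> []" using assms by simp
  then obtain x r where xr: "take (j'-j) (drop j cs) = x # r" by (cases "take (j'-j) (drop j cs)") auto
  have "length (C n (take j' cs)) = length (C n (take j cs)) + length (tok n x) + length (C n r)"
    unfolding t xr by simp
  then show ?thesis using tok_len[of n x] by linarith
qed

lemma pos_le: assumes "j \<le> j'" "j' \<le> length cs"
  shows "length (C n (take j cs)) \<le> length (C n (take j' cs))"
  using pos_less[of j j' cs n] assms by (cases "j = j'") auto

lemma pos_inj: assumes "j \<le> length cs" "j' \<le> length cs"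
  "length (C n (take j cs)) = length (C n (take j' cs))" shows "j = j'"
  using pos_less[of j j' cs n] pos_less[of j' j cs n] assms by (metis linorder_neqE_nat less_irrefl)

lemma pos_Suc: "j < length cs \<Longrightarrow>
  length (C n (take (Suc j) cs)) = length (C n (take j cs)) + length (tok n (cs!j))"
  by (simp add: take_Suc_conv_app_nth)

lemma C_split: "j < length cs \<Longrightarrow>
  C n cs = C n (take j cs) @ tok n (cs!j) @ C n (drop (Suc j) cs)"
  by (metis C_simps(2,3) id_take_nth_drop)

lemma C_nth_pos: "j < length cs \<Longrightarrow> C n cs ! length (C n (take j cs)) = (if cs!j then 0 else 1)"
proof -
  assume j: "j < length cs"
  have "C n cs ! length (C n (take j cs)) = (tok n (cs!j) @ C n (drop (Suc j) cs)) ! 0"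
    by (subst C_split[OF j, of n]) (metis nth_append_length_plus add_0_right)
  also have "\<dots> = tok n (cs!j) ! 0" using tok_len[of n "cs!j"] by (auto simp add: nth_append)
  finally show ?thesis by (simp add: tok_hd)
qed

lemma occ_intro: "length xs = i \<Longrightarrow> i \<in> occurrences u (xs @ u @ ys)"
  by (simp add: occurrences_def)

lemma occ_app: assumes "i \<in> occurrences (u1@u2) v"
  shows "i \<in> occurrences u1 v \<and> i + length u1 \<in> occurrences u2 v"
proof -
  have len: "i + length u1 + length u2 \<le> length v"
    and e: "take (length u1 + length u2) (drop i v) = u1 @ u2"
    using assms by (auto simp: occurrences_def)
  have "take (length u1 + length u2) (drop i v)
      = take (length u1) (drop i v) @ take (length u2) (drop (i + length u1) v)"
    by (simp add: take_add add.commute)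
  with e have "take (length u1) (drop i v) = u1 \<and> take (length u2) (drop (i + length u1) v) = u2"
    using len append_eq_append_conv[of "take (length u1) (drop i v)" u1] by auto
  with len show ?thesis by (auto simp: occurrences_def)
qed

lemma occ_nth: "i \<in> occurrences u v \<Longrightarrow> p < length u \<Longrightarrow> v ! (i+p) = u ! p"
  unfolding occurrences_def by (metis (mono_tags, lifting) mem_Collect_eq nth_drop nth_take add_leD1 le_add_diff_inverse add_less_cancel_left)

lemma sig_start: "sig bs \<noteq> [] \<Longrightarrow> sig bs ! 0 \<Longrightarrow> 1 < length (sig bs) \<and> sig bs ! 1"
  by (cases bs) (auto split: if_splits)

lemma sig_pat: "j + 3 < length (sig bs) \<Longrightarrow> sig bs ! j \<Longrightarrow> sig bs ! (j+1) \<Longrightarrow>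
   \<not> sig bs ! (j+2) \<Longrightarrow> sig bs ! (j+3) \<Longrightarrow>
   \<exists>m < length bs. bs ! m \<and> j = length (sig (take m bs))"
proof (induct bs arbitrary: j)
  case Nil then show ?case by simp
next
  case (Cons b bs)
  show ?case
  proof (cases b)
    case False
    then obtain j' where j: "j = Suc j'" using Cons.prems by (cases j) auto
    then have "\<exists>m < length bs. bs ! m \<and> j' = length (sig (take m bs))"
      using Cons False by (intro Cons.hyps) (auto simp: add.commute)
    then obtain m where "m < length bs" "bs ! m" "j' = length (sig (take m bs))" by blast
    then show ?thesis using j False by (intro exI[of _ "Suc m"]) auto
  next
    case True
    show ?thesis
    proof (cases "j < 4")
      case True': True
      show ?thesis
      proof (cases "j = 0")
        case True then show ?thesis using \<open>b\<close> by (intro exI[of _ 0]) auto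
      next
        case False
        then have "j = 1 \<or> j = 2 \<or> j = 3" using True' by auto
        moreover have "j \<noteq> 1" "j \<noteq> 2" using Cons.prems \<open>b\<close> by auto
        ultimately have j3: "j = 3" by auto
        have a: "sig bs ! 0" "\<not> sig bs ! 1" "sig bs \<noteq> []"
          using Cons.prems \<open>b\<close> j3 by auto
        then show ?thesis using sig_start[of bs] by auto
      qed
    next
      case False
      then obtain j' where j: "j = j' + 4" by (metis add.commute le_Suc_ex not_less)
      then have "\<exists>m < length bs. bs ! m \<and> j' = length (sig (take m bs))"
        using Cons \<open>b\<close> by (intro Cons.hyps) (auto simp: nth_append add.commute)
      then obtain m where "m < length bs" "bs ! m" "j' = length (sig (take m bs))" by blast
      then show ?thesis using j \<open>b\<close> by (intro exI[of _ "Suc m"]) auto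
    qed
  qed
qed


lemma C0: "C 0 bs = map (\<lambda>b. if b then 0 else 1) bs"
  by (induct bs) (auto simp: tok_def)

lemma main: "occurrences (W n) (C n bs) =
  (\<lambda>j. length (C n (take j bs))) ` {j. j < length bs \<and> bs!j}"
proof (induct n arbitrary: bs)
  case 0
  have "i \<in> occurrences [0] (map (\<lambda>b. if b then 0 else 1::nat) bs) \<longleftrightarrow> i < length bs \<and> bs ! i" for i
  proof
    assume a: "i \<in> occurrences [0] (map (\<lambda>b. if b then 0 else 1::nat) bs)"
    then have i: "i < length bs" by (auto simp: occurrences_def)
    have "map (\<lambda>b. if b then 0 else 1::nat) bs ! i = 0"
      using occ_nth[OF a, of 0] by simp
    then show "i < length bs \<and> bs ! i" using i by (auto split: if_splits)
  next
    assume "i < length bs \<and> bs ! i"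
    then show "i \<in> occurrences [0] (map (\<lambda>b. if b then 0 else 1::nat) bs)"
      by (auto simp: occurrences_def take_Suc_conv_app_nth)
  qed
  then show ?case by (auto simp: C0 image_iff)
next
  case (Suc n)
  define cs where "cs = sig bs"
  define pos where "pos j = length (C n (take j cs))" for j
  define L where "L = length (W n)"
  have tokT: "length (tok n True) = L" "length (tok n False) = 1" by (auto simp: tok_def L_def)
  show ?case
  proof (intro equalityI subsetI)
    fix i assume "i \<in> (\<lambda>j. length (C (Suc n) (take j bs))) ` {j. j < length bs \<and> bs!j}"
    then obtain j where j: "j < length bs" "bs ! j" "i = length (C (Suc n) (take j bs))" by auto
    have eq: "C (Suc n) bs = C (Suc n) (take j bs) @ W (Suc n) @ C (Suc n) (drop (Suc j) bs)"
      using C_split[OF j(1), of "Suc n"] j(2) by (simp add: tok_def)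
    have "i \<in> occurrences (W (Suc n)) (C (Suc n) (take j bs) @ W (Suc n) @ C (Suc n) (drop (Suc j) bs))"
      using occ_intro[of "C (Suc n) (take j bs)" i "W (Suc n)" "C (Suc n) (drop (Suc j) bs)"] j(3)
      by blast
    then show "i \<in> occurrences (W (Suc n)) (C (Suc n) bs)" unfolding eq .
  next
    fix i assume "i \<in> occurrences (W (Suc n)) (C (Suc n) bs)"
    then have o: "i \<in> occurrences (W n @ W n @ [1] @ W n) (C n cs)"
      by (simp add: cs_def C_sig)
    from occ_app[OF o] have o1: "i \<in> occurrences (W n) (C n cs)"
      and o': "i + L \<in> occurrences (W n @ [1] @ W n) (C n cs)" by (auto simp: L_def)
    from occ_app[OF o'] have o2: "i + L \<in> occurrences (W n) (C n cs)"
      and o'': "i + L + L \<in> occurrences ([1] @ W n) (C n cs)" by (auto simp: L_def)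
    from occ_app[OF o''] have o3: "i + L + L \<in> occurrences [1] (C n cs)"
      and o4: "i + L + L + 1 \<in> occurrences (W n) (C n cs)" by auto
    from o1 Suc[of cs] obtain j where j: "j < length cs" "cs ! j" "i = pos j"
      by (auto simp: pos_def)
    from o2 Suc[of cs] obtain j1 where j1: "j1 < length cs" "cs ! j1" "i + L = pos j1"
      by (auto simp: pos_def)
    from o4 Suc[of cs] obtain j3 where j3: "j3 < length cs" "cs ! j3" "i + L + L + 1 = pos j3"
      by (auto simp: pos_def)
    have posSuc: "pos (Suc k) = pos k + length (tok n (cs!k))" if "k < length cs" for k
      using pos_Suc[OF that, of n] unfolding pos_def .
    have posinj: "a = b" if "a \<le> length cs" "b \<le> length cs" "pos a = pos b" for a b
      using pos_inj[of a cs b n] that unfolding pos_def by blast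
    have posle: "pos a \<le> pos b" if "a \<le> b" "b \<le> length cs" for a b
      using pos_le[of a b cs n] that unfolding pos_def by blast
    have posnth: "C n cs ! pos k = (if cs!k then 0 else 1)" if "k < length cs" for k
      using C_nth_pos[OF that, of n] unfolding pos_def .
    have p1: "pos (Suc j) = i + L" using posSuc[OF j(1)] j(2,3) tokT(1) by simp
    have "j1 = Suc j" using posinj[of j1 "Suc j"] j1 j(1) p1 by simp
    with j1 have sj: "Suc j < length cs" "cs ! Suc j" by auto
    have p2: "pos (Suc (Suc j)) = i + L + L" using posSuc[OF sj(1)] sj(2) p1 tokT(1) by simp
    have "j3 > Suc (Suc j)"
    proof (rule ccontr)
      assume "\<not> ?thesis"
      then have "pos j3 \<le> pos (Suc (Suc j))" using posle[of j3 "Suc (Suc j)"] sj by simp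
      then show False using p2 j3(3) by linarith
    qed
    then have ssj: "Suc (Suc j) < length cs" using j3 by simp
    have "C n cs ! (i + L + L) = 1" using occ_nth[OF o3, of 0] by simp
    then have nss: "\<not> cs ! Suc (Suc j)" using posnth[OF ssj] p2
      by (auto split: if_splits)
    have p3: "pos (Suc (Suc (Suc j))) = i + L + L + 1" using posSuc[OF ssj] nss p2 tokT(2) by simp
    have "j3 = Suc (Suc (Suc j))" using posinj[of j3 "Suc (Suc (Suc j))"] j3 p3 \<open>j3 > _\<close>
      by simp
    with j3 have pat: "j + 3 < length (sig bs)" "sig bs ! (j+3)" by (auto simp: cs_def numeral_3_eq_3)
    obtain m where m: "m < length bs" "bs ! m" "j = length (sig (take m bs))"
      using sig_pat[of j bs] pat j sj nss by (auto simp: cs_def)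
    have "take j cs = sig (take m bs)"
      using m(3) sig_append[of "take m bs" "drop m bs"] by (simp add: cs_def)
    then have "i = length (C (Suc n) (take m bs))" using j(3) by (simp add: pos_def C_sig)
    then show "i \<in> (\<lambda>j. length (C (Suc n) (take j bs))) ` {j. j < length bs \<and> bs!j}"
      using m by auto
  qed
qed

theorem lemma1:
  fixes n k :: nat
  shows "card (occurrences (W n) (W (n + k))) = 3 ^ k"
proof -
  define cs where "cs = (sig ^^ k) [True]"
  have cnt: "length (filter id cs) = 3 ^ k" unfolding cs_def
    by (induct k) (auto simp: cnt_sig[unfolded id_def])
  have inj: "inj_on (\<lambda>j. length (C n (take j cs))) {j. j < length cs \<and> cs!j}"
    proof (rule inj_onI)
    fix x y assume "x \<in> {j. j < length cs \<and> cs!j}" "y \<in> {j. j < length cs \<and> cs!j}"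
      "length (C n (take x cs)) = length (C n (take y cs))"
    then show "x = y" using pos_inj[of x cs y n] by simp
  qed
  have "card (occurrences (W n) (W (n + k))) = card {j. j < length cs \<and> cs!j}"
    unfolding W_C main cs_def[symmetric] by (rule card_image[OF inj])
  also have "\<dots> = length (filter id cs)" by (simp add: length_filter_conv_card)
  finally show ?thesis using cnt by simp
qed

end
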